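(* Let $K$ satisfy the standing kernel assumptions (see context) and assume in addition that $K(x,y)\ge c_0$ for all $x,y>0$, for some $c_0>0$. Let $f$ be a self-similar profile for $K$ with $\int_0^\infty x f(x)\,dx=M<\infty$. Then $\lim_{q\to0}\mathcal{M}(f,f)(q)=0$.
   Context: Standing kernel assumptions: $\alpha\in[0,1)$, $\varepsilon>0$, $C_0>0$; $K:(0,\infty)^2\to[0,\infty)$ is symmetric, homogeneous of degree zero, differentiable, and with $W(x,y):=K(x,y)-2$: $W\ge-\varepsilon$, $W(x,y)\le \varepsilon((x/y)^{\alpha}+(y/x)^{\alpha})$, $|\partial_x K(x,y)|\le \frac{C_0\varepsilon}{x}((x/y)^{\alpha}+(y/x)^{\alpha})$ for all $x,y>0$. A self-similar profile for $K$ is $f\in L^1_{loc}(0,\infty)$, $f\ge0$, $\int_0^\infty xf\,dx<\infty$, with $x^2 f(x)=\int_0^x dy\int_{x-y}^\infty dz\,K(y,z)\,y\,f(y)f(z)$ for a.e. $x>0$. For $q\ge 0$ define $$\mathcal{M}(f,f)(q)=\frac12\int_0^\infty\int_0^\infty W(x,y)f(x)f(y)(1-e^{-qx})(1-e^{-qy})\,dx\,dy.$$ *)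

theory Defs
  imports "HOL-Analysis.Analysis"
begin

definition kernel_assumptions ::
  "real \<Rightarrow> real \<Rightarrow> real \<Rightarrow> (real \<Rightarrow> real \<Rightarrow> real) \<Rightarrow> bool" where
  "kernel_assumptions \<alpha> \<epsilon> C0 K \<longleftrightarrow>
     0 \<le> \<alpha> \<and> \<alpha> < 1 \<and> \<epsilon> > 0 \<and> C0 > 0 \<and>
     (\<forall>x>0. \<forall>y>0. K x y \<ge> 0) \<and>
     (\<forall>x>0. \<forall>y>0. K x y = K y x) \<and>
     (\<forall>x>0. \<forall>y>0. \<forall>l>0. K (l * x) (l * y) = K x y) \<and>
     (\<forall>x>0. \<forall>y>0. (\<lambda>p. K (fst p) (snd p)) differentiable (at (x, y))) \<and>
     (\<forall>x>0. \<forall>y>0. K x y - 2 \<ge> - \<epsilon>) \<and>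
     (\<forall>x>0. \<forall>y>0. K x y - 2 \<le> \<epsilon> * ((x / y) powr \<alpha> + (y / x) powr \<alpha>)) \<and>
     (\<forall>x>0. \<forall>y>0. \<bar>deriv (\<lambda>t. K t y) x\<bar>
                    \<le> C0 * \<epsilon> / x * ((x / y) powr \<alpha> + (y / x) powr \<alpha>))"

text \<open>Self-similar profile: f >= 0, locally integrable on (0,oo), finite first moment,
  and the integral equation for a.e. x > 0 (nonnegative integrands, so the
  nonnegative Lebesgue integral is used).\<close>
definition self_similar_profile :: "(real \<Rightarrow> real \<Rightarrow> real) \<Rightarrow> (real \<Rightarrow> real) \<Rightarrow> bool" where
  "self_similar_profile K f \<longleftrightarrow>
     (\<forall>x>0. f x \<ge> 0) \<and>
     (\<forall>a b. 0 < a \<longrightarrow> set_integrable lborel {a..b} f) \<and>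
     set_integrable lborel {0<..} (\<lambda>x. x * f x) \<and>
     (AE x in lborel. x > 0 \<longrightarrow>
        ennreal (x\<^sup>2 * f x) =
          (\<integral>\<^sup>+ y. (\<integral>\<^sup>+ z. ennreal (K y z * y * f y * f z) * indicator {x - y<..} z \<partial>lborel)
                     * indicator {0<..<x} y \<partial>lborel))"

text \<open>M(f,f)(q), with W = K - 2, as a Lebesgue (Bochner) integral over (0,oo)^2.\<close>
definition Mff :: "(real \<Rightarrow> real \<Rightarrow> real) \<Rightarrow> (real \<Rightarrow> real) \<Rightarrow> real \<Rightarrow> real" where
  "Mff K f q = 1/2 * (\<integral>p. indicator ({0<..} \<times> {0<..}) p *
        ((K (fst p) (snd p) - 2) * f (fst p) * f (snd p)
         * (1 - exp (- q * fst p)) * (1 - exp (- q * snd p))) \<partial>(lborel \<Otimes>\<^sub>M lborel))"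

end

theory Submission
  imports Defs
begin

lemma meas_pos:
  fixes f :: "real \<Rightarrow> real"
  assumes intf: "\<forall>a b. 0 < a \<longrightarrow> set_integrable lborel {a..b} f"
  shows "(\<lambda>x. indicator {0<..} x * f x) \<in> borel_measurable borel"
proof (rule borel_measurable_LIMSEQ_real)
  fix i :: nat
  have "set_integrable lborel {1/Suc i..Suc i} f" using intf by simp
  then have "(\<lambda>x. indicator {1/Suc i..Suc i} x *\<^sub>R f x) \<in> borel_measurable lborel"
    unfolding set_integrable_def by (rule borel_measurable_integrable)
  then show "(\<lambda>x. indicator {1/Suc i..real (Suc i)} x * f x) \<in> borel_measurable borel" by simp
next
  fix x :: real
  show "(\<lambda>i. indicator {1/Suc i..real (Suc i)} x * f x) \<longlonglongrightarrow> indicator {0<..} x * f x"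
  proof (cases "x > 0")
    case True
    obtain N :: nat where N: "max x (1/x) \<le> N" using real_arch_simple by blast
    have "eventually (\<lambda>i. indicator {1/Suc i..real (Suc i)} x * f x = indicator {0<..} x * f x) sequentially"
      unfolding eventually_sequentially
    proof (intro exI allI impI)
      fix i assume "N \<le> i"
      then have h: "max x (1/x) \<le> real (Suc i)" using N by linarith
      then have "x \<le> Suc i" by simp
      moreover have "1/Suc i \<le> x" using h True
        by (simp add: field_simps)
      ultimately show "indicator {1/Suc i..real (Suc i)} x * f x = indicator {0<..} x * f x"
        using True by (simp add: indicator_def)
    qed
    then show ?thesis by (rule tendsto_eventually)
  next
    case False
    have "\<not> 1/Suc i \<le> x" for i :: nat
      using False by (smt (verit) of_nat_0_less_iff zero_less_Suc divide_pos_pos)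
    then show ?thesis using False by (simp add: indicator_def)
  qed
qed

lemma reduce_ssp:
  fixes f :: "real \<Rightarrow> real"
  assumes ssp: "self_similar_profile K f"
  shows "self_similar_profile K (\<lambda>x. indicator {0<..} x * f x)"
proof -
  let ?g = "\<lambda>x. indicator {0<..} x * f x"
  note s = ssp[unfolded self_similar_profile_def]
  have 1: "\<forall>x>0. ?g x \<ge> 0" using s by simp
  have 2: "set_integrable lborel {a..b} ?g" if "0 < a" for a b
  proof -
    have "set_integrable lborel {a..b} f" using s that by blast
    moreover have "integrable lborel (\<lambda>x. indicator {a..b} x *\<^sub>R f x) = integrable lborel (\<lambda>x. indicator {a..b} x *\<^sub>R ?g x)"
      by (rule Bochner_Integration.integrable_cong[OF refl]) (use that in \<open>auto simp: indicator_def\<close>)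
    ultimately show ?thesis unfolding set_integrable_def by simp
  qed
  have 3: "set_integrable lborel {0<..} (\<lambda>x. x * ?g x)"
  proof -
    have "integrable lborel (\<lambda>x. indicator {0<..} x *\<^sub>R (x * f x)) = integrable lborel (\<lambda>x. indicator {0<..} x *\<^sub>R (x * ?g x))"
      by (rule Bochner_Integration.integrable_cong[OF refl]) (auto simp: indicator_def)
    then show ?thesis using s unfolding set_integrable_def by simp
  qed
  have 4: "AE x in lborel. x > 0 \<longrightarrow>
        ennreal (x\<^sup>2 * ?g x) =
          (\<integral>\<^sup>+ y. (\<integral>\<^sup>+ z. ennreal (K y z * y * ?g y * ?g z) * indicator {x - y<..} z \<partial>lborel)
                     * indicator {0<..<x} y \<partial>lborel)"
    using s[THEN conjunct2, THEN conjunct2, THEN conjunct2]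
  proof (rule AE_mp, intro AE_I2 impI)
    fix x :: real
    assume h: "x > 0 \<longrightarrow> ennreal (x\<^sup>2 * f x) =
          (\<integral>\<^sup>+ y. (\<integral>\<^sup>+ z. ennreal (K y z * y * f y * f z) * indicator {x - y<..} z \<partial>lborel)
                     * indicator {0<..<x} y \<partial>lborel)" and x: "x > 0"
    have "(\<integral>\<^sup>+ y. (\<integral>\<^sup>+ z. ennreal (K y z * y * ?g y * ?g z) * indicator {x - y<..} z \<partial>lborel)
                     * indicator {0<..<x} y \<partial>lborel) =
          (\<integral>\<^sup>+ y. (\<integral>\<^sup>+ z. ennreal (K y z * y * f y * f z) * indicator {x - y<..} z \<partial>lborel)
                     * indicator {0<..<x} y \<partial>lborel)"
    proof (rule nn_integral_cong)
      fix y :: real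
      show "(\<integral>\<^sup>+ z. ennreal (K y z * y * ?g y * ?g z) * indicator {x - y<..} z \<partial>lborel)
                     * indicator {0<..<x} y =
            (\<integral>\<^sup>+ z. ennreal (K y z * y * f y * f z) * indicator {x - y<..} z \<partial>lborel)
                     * indicator {0<..<x} y"
      proof (cases "y \<in> {0<..<x}")
        case True
        have "(\<integral>\<^sup>+ z. ennreal (K y z * y * ?g y * ?g z) * indicator {x - y<..} z \<partial>lborel) =
              (\<integral>\<^sup>+ z. ennreal (K y z * y * f y * f z) * indicator {x - y<..} z \<partial>lborel)"
          using True by (intro nn_integral_cong) (auto simp: indicator_def)
        then show ?thesis by simp
      qed simp
    qed
    then show "ennreal (x\<^sup>2 * ?g x) =
          (\<integral>\<^sup>+ y. (\<integral>\<^sup>+ z. ennreal (K y z * y * ?g y * ?g z) * indicator {x - y<..} z \<partial>lborel)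
                     * indicator {0<..<x} y \<partial>lborel)" using h x by simp
  qed
  show ?thesis unfolding self_similar_profile_def using 1 2 3 4 by blast
qed

lemma reduce_Mff:
  fixes f :: "real \<Rightarrow> real"
  shows "Mff K f = Mff K (\<lambda>x. indicator {0<..} x * f x)"
  unfolding Mff_def
  by (intro ext arg_cong[where f="\<lambda>x. 1/2 * x"] Bochner_Integration.integral_cong)
     (auto simp: indicator_def)


lemma mc_lemma:
  fixes h :: "real \<Rightarrow> ennreal" and b :: real
  assumes [measurable]: "h \<in> borel_measurable borel" and b: "b > 0"
  shows "(\<integral>\<^sup>+x. h x * indicator {0<..<b} x \<partial>lborel) = (SUP n. \<integral>\<^sup>+x. h x * indicator {b/Suc n..<b} x \<partial>lborel)"
proof -
  have inc: "incseq (\<lambda>n x. h x * indicator {b/Suc n..<b} x)"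
  proof (rule incseq_SucI, rule le_funI)
    fix n x
    have "b / Suc (Suc n) \<le> b / Suc n" using b by (intro divide_left_mono) auto
    then have "indicator {b/Suc n..<b} x \<le> (indicator {b/Suc (Suc n)..<b} x :: ennreal)"
      by (auto simp: indicator_def)
    then show "h x * indicator {b/Suc n..<b} x \<le> h x * indicator {b/Suc (Suc n)..<b} x"
      by (intro mult_left_mono) auto
  qed
  have pt: "h x * indicator {0<..<b} x = (SUP n. h x * indicator {b/Suc n..<b} x)" for x
  proof (cases "0 < x \<and> x < b")
    case True
    obtain n :: nat where n: "b / x \<le> n" using real_arch_simple by blast
    have "b \<le> x * Suc n" using True n b
      by (smt (verit, best) divide_le_eq mult.commute of_nat_Suc mult_left_mono)
    then have "b / Suc n \<le> x" by (simp add: divide_le_eq mult.commute)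
    then have e: "h x * indicator {b/Suc n..<b} x = h x" using True by (simp add: indicator_def)
    have "(SUP n. h x * indicator {b/Suc n..<b} x) = h x"
    proof (rule antisym)
      show "(SUP n. h x * indicator {b/Suc n..<b} x) \<le> h x"
      proof (intro SUP_least)
        fix n
        show "h x * indicator {b/Suc n..<b} x \<le> h x"
          by (cases "x \<in> {b/Suc n..<b}") simp_all
      qed
      have "h x * indicator {b/Suc n..<b} x \<le> (SUP n. h x * indicator {b/Suc n..<b} x)"
        by (rule SUP_upper) simp
      then show "h x \<le> (SUP n. h x * indicator {b/Suc n..<b} x)"
        using e by simp
    qed
    then show ?thesis using True by (simp add: indicator_def)
  next
    case False
    have "b / Suc n > 0" for n using b by simp
    then have "\<And>n. x \<notin> {b/Suc n..<b}" using False by (smt (verit) atLeastLessThan_iff)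
    then have z: "\<And>n. h x * indicator {b/Suc n..<b} x = 0" by simp
    have "(SUP n. h x * indicator {b/Suc n..<b} x) = (SUP n::nat. 0::ennreal)" by (simp only: z)
    moreover have "h x * indicator {0<..<b} x = 0" using False by simp
    ultimately show ?thesis by simp
  qed
  show ?thesis
    by (simp only: pt, rule nn_integral_monotone_convergence_SUP[OF inc]) measurable
qed

lemma inner_powr:
  fixes y \<delta> \<beta> :: real
  assumes "0 < y" "y \<le> \<delta>" "0 < \<beta>"
  shows "(\<integral>\<^sup>+x. ennreal (x powr (-1-\<beta>)) * indicator {y<..<\<delta>} x \<partial>lborel)
         = ennreal ((y powr (-\<beta>) - \<delta> powr (-\<beta>)) / \<beta>)"
proof -
  let ?F = "\<lambda>x::real. - (x powr (-\<beta>)) / \<beta>"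
  have "((\<lambda>x. x powr (-1-\<beta>)) has_integral (?F \<delta> - ?F y)) {y..\<delta>}"
  proof (rule fundamental_theorem_of_calculus)
    show "y \<le> \<delta>" by fact
    fix x assume x: "x \<in> {y..\<delta>}"
    then have xp: "x > 0" using assms by auto
    have "(?F has_real_derivative (- ((-\<beta>) * x powr (-\<beta> - 1)) / \<beta>)) (at x)"
    proof -
      have "((\<lambda>x. x powr (-\<beta>)) has_real_derivative (-\<beta>) * x powr (-\<beta> - 1)) (at x)"
        by (rule has_real_derivative_powr[OF xp])
      then have "((\<lambda>x. - (x powr (-\<beta>))) has_real_derivative - ((-\<beta>) * x powr (-\<beta> - 1))) (at x)"
        by (rule DERIV_minus)
      then show ?thesis by (rule DERIV_cdivide)
    qed
    moreover have "- ((-\<beta>) * x powr (-\<beta> - 1)) / \<beta> = x powr (-1-\<beta>)"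
    proof -
      have e: "x powr (-\<beta> - 1) = x powr (-1 - \<beta>)" by (rule arg_cong[where f="\<lambda>t. x powr t"]) simp
      show ?thesis unfolding e using assms by (simp add: field_simps)
    qed
    ultimately have "(?F has_real_derivative x powr (-1-\<beta>)) (at x within {y..\<delta>})"
      by (metis has_field_derivative_at_within)
    then show "(?F has_vector_derivative x powr (-1-\<beta>)) (at x within {y..\<delta>})"
      by (simp add: has_real_derivative_iff_has_vector_derivative)
  qed
  then have hi: "((\<lambda>x. x powr (-1-\<beta>)) has_integral ((y powr (-\<beta>) - \<delta> powr (-\<beta>)) / \<beta>)) {y<..<\<delta>}"
    by (simp add: has_integral_Icc_iff_Ioo diff_divide_distrib)
  show ?thesis
    using nn_integral_has_integral_lebesgue'[OF _ hi] by simp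
qed

lemma pred_Ico_snd[measurable]:
  fixes \<eta> :: real
  shows "Measurable.pred (borel \<Otimes>\<^sub>M borel) (\<lambda>x::real\<times>real. snd x \<in> {\<eta>..<fst x})"
  unfolding atLeastLessThan_iff by measurable

lemma key_step:
  fixes f :: "real \<Rightarrow> real" and \<beta> \<delta> \<eta> :: real
  assumes fm[measurable]: "f \<in> borel_measurable borel" and nn: "\<And>x. 0 \<le> f x"
    and intf: "\<And>a b. 0 < a \<Longrightarrow> set_integrable lborel {a..b} f"
    and \<beta>: "0 < \<beta>" "\<beta> < 1" and \<delta>: "0 < \<delta>" "\<delta> \<le> 1" and \<eta>: "0 < \<eta>" "\<eta> < \<delta>"
    and ineq2: "AE x in lborel. 0 < x \<and> x < \<delta> \<longrightarrow>
       ennreal (2*\<beta>) * (\<integral>\<^sup>+y. ennreal (y * f y) * indicator {0<..<x} y \<partial>lborel) \<le> ennreal (x^2 * f x)"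
  shows "(\<integral>\<^sup>+y. ennreal (y powr (1-\<beta>) * f y) * indicator {\<eta>..<\<delta>} y \<partial>lborel)
         \<le> ennreal (2 * \<delta> powr (-\<beta>)) * (\<integral>\<^sup>+y. ennreal (y * f y) * indicator {0<..} y \<partial>lborel)"
proof -
  define I where "I = (\<integral>\<^sup>+y. ennreal (y powr (1-\<beta>) * f y) * indicator {\<eta>..<\<delta>} y \<partial>lborel)"
  define T where "T = (\<integral>\<^sup>+x. ennreal (x powr (-1-\<beta>)) * indicator {\<eta><..<\<delta>} x *
                     (\<integral>\<^sup>+y. ennreal (y * f y) * indicator {\<eta>..<x} y \<partial>lborel) \<partial>lborel)"
  define P where "P = (\<integral>\<^sup>+y. ennreal (y * f y) * indicator {\<eta>..<\<delta>} y \<partial>lborel)"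
  define Mt where "Mt = (\<integral>\<^sup>+y. ennreal (y * f y) * indicator {0<..} y \<partial>lborel)"
  define D where "D y = (y powr (-\<beta>) - \<delta> powr (-\<beta>)) / \<beta>" for y
  define d where "d = \<delta> powr (-\<beta>)"
  have dpos: "d > 0" using \<delta> by (simp add: d_def)

  have Ifin: "I < top"
  proof -
    have "I \<le> (\<integral>\<^sup>+y. ennreal (norm (indicator {\<eta>..\<delta>} y *\<^sub>R f y)) \<partial>lborel)"
      unfolding I_def
    proof (rule nn_integral_mono)
      fix y
      show "ennreal (y powr (1-\<beta>) * f y) * indicator {\<eta>..<\<delta>} y \<le> ennreal (norm (indicator {\<eta>..\<delta>} y *\<^sub>R f y))"
      proof (cases "y \<in> {\<eta>..<\<delta>}")
        case True
        then have "y powr (1-\<beta>) \<le> 1 powr (1-\<beta>)" using \<eta> \<delta> \<beta> by (intro powr_mono2) auto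
        then have "y powr (1-\<beta>) * f y \<le> f y" using nn[of y] by (simp add: mult_left_le_one_le)
        then show ?thesis using True nn[of y] by (auto simp: indicator_def intro!: ennreal_leI)
      qed simp
    qed
    also have "\<dots> < top"
      using intf[of \<eta> \<delta>] \<eta> unfolding set_integrable_def integrable_iff_bounded by simp
    finally show ?thesis .
  qed

  have Tup: "ennreal (2*\<beta>) * T \<le> I"
  proof -
    have "ennreal (2*\<beta>) * T = (\<integral>\<^sup>+x. ennreal (2*\<beta>) * (ennreal (x powr (-1-\<beta>)) * indicator {\<eta><..<\<delta>} x *
                     (\<integral>\<^sup>+y. ennreal (y * f y) * indicator {\<eta>..<x} y \<partial>lborel)) \<partial>lborel)"
      unfolding T_def by (rule nn_integral_cmult[symmetric]) measurable
    also have "\<dots> \<le> I"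
      unfolding I_def
    proof (rule nn_integral_mono_AE)
      show "AE x in lborel. ennreal (2*\<beta>) * (ennreal (x powr (-1-\<beta>)) * indicator {\<eta><..<\<delta>} x *
                     (\<integral>\<^sup>+y. ennreal (y * f y) * indicator {\<eta>..<x} y \<partial>lborel))
            \<le> ennreal (x powr (1-\<beta>) * f x) * indicator {\<eta>..<\<delta>} x"
        using ineq2
      proof (rule AE_mp, intro AE_I2 impI)
        fix x :: real
        assume h: "0 < x \<and> x < \<delta> \<longrightarrow>
          ennreal (2*\<beta>) * (\<integral>\<^sup>+y. ennreal (y * f y) * indicator {0<..<x} y \<partial>lborel) \<le> ennreal (x^2 * f x)"
        show "ennreal (2*\<beta>) * (ennreal (x powr (-1-\<beta>)) * indicator {\<eta><..<\<delta>} x *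
                     (\<integral>\<^sup>+y. ennreal (y * f y) * indicator {\<eta>..<x} y \<partial>lborel))
            \<le> ennreal (x powr (1-\<beta>) * f x) * indicator {\<eta>..<\<delta>} x"
        proof (cases "x \<in> {\<eta><..<\<delta>}")
          case True
          then have x: "0 < x" "x < \<delta>" using \<eta> by auto
          have "(\<integral>\<^sup>+y. ennreal (y * f y) * indicator {\<eta>..<x} y \<partial>lborel)
                \<le> (\<integral>\<^sup>+y. ennreal (y * f y) * indicator {0<..<x} y \<partial>lborel)"
            by (intro nn_integral_mono mult_left_mono) (use \<eta> in \<open>auto simp: indicator_def\<close>)
          then have "ennreal (2*\<beta>) * (\<integral>\<^sup>+y. ennreal (y * f y) * indicator {\<eta>..<x} y \<partial>lborel) \<le> ennreal (x^2 * f x)"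
            using h x by (meson mult_left_mono order_trans zero_le)
          then have "ennreal (x powr (-1-\<beta>)) * (ennreal (2*\<beta>) * (\<integral>\<^sup>+y. ennreal (y * f y) * indicator {\<eta>..<x} y \<partial>lborel))
                \<le> ennreal (x powr (-1-\<beta>)) * ennreal (x^2 * f x)"
            by (rule mult_left_mono) simp
          also have "\<dots> = ennreal (x powr (-1-\<beta>) * (x^2 * f x))"
            using nn[of x] by (simp add: ennreal_mult)
          also have "x powr (-1-\<beta>) * (x^2 * f x) = x powr (1-\<beta>) * f x"
          proof -
            have "x^2 = x powr 2" using x by (simp add: powr_realpow)
            moreover have "x powr (-1-\<beta>) * x powr 2 = x powr (-1-\<beta>+2)" by (rule powr_add[symmetric])
            moreover have "-1-\<beta>+2 = 1-\<beta>" by simp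
            ultimately have "x powr (-1-\<beta>) * x^2 = x powr (1-\<beta>)" by simp
            then show ?thesis by (simp add: mult.assoc[symmetric])
          qed
          finally show ?thesis using True \<eta> by (simp add: indicator_def mult_ac)
        qed simp
      qed
    qed
    finally show ?thesis .
  qed

  have Teq: "T = (\<integral>\<^sup>+y. ennreal (y * f y) * indicator {\<eta>..<\<delta>} y * ennreal (D y) \<partial>lborel)"
  proof -
    have "T = (\<integral>\<^sup>+x. \<integral>\<^sup>+y. ennreal (x powr (-1-\<beta>)) * indicator {\<eta><..<\<delta>} x *
                     (ennreal (y * f y) * indicator {\<eta>..<x} y) \<partial>lborel \<partial>lborel)"
      unfolding T_def by (intro nn_integral_cong nn_integral_cmult[symmetric]) measurable
    also have "\<dots> = (\<integral>\<^sup>+y. \<integral>\<^sup>+x. ennreal (x powr (-1-\<beta>)) * indicator {\<eta><..<\<delta>} x *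
                     (ennreal (y * f y) * indicator {\<eta>..<x} y) \<partial>lborel \<partial>lborel)"
      by (rule lborel_pair.Fubini'[symmetric]) measurable
    also have "\<dots> = (\<integral>\<^sup>+y. \<integral>\<^sup>+x. (ennreal (y * f y) * indicator {\<eta>..<\<delta>} y) *
                     (ennreal (x powr (-1-\<beta>)) * indicator {y<..<\<delta>} x) \<partial>lborel \<partial>lborel)"
      by (intro nn_integral_cong) (auto simp: indicator_def mult_ac)
    also have "\<dots> = (\<integral>\<^sup>+y. (ennreal (y * f y) * indicator {\<eta>..<\<delta>} y) *
                     (\<integral>\<^sup>+x. ennreal (x powr (-1-\<beta>)) * indicator {y<..<\<delta>} x \<partial>lborel) \<partial>lborel)"
      by (intro nn_integral_cong nn_integral_cmult) measurable
    also have "\<dots> = (\<integral>\<^sup>+y. ennreal (y * f y) * indicator {\<eta>..<\<delta>} y * ennreal (D y) \<partial>lborel)"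
    proof (intro nn_integral_cong)
      fix y
      show "(ennreal (y * f y) * indicator {\<eta>..<\<delta>} y) *
                     (\<integral>\<^sup>+x. ennreal (x powr (-1-\<beta>)) * indicator {y<..<\<delta>} x \<partial>lborel)
            = ennreal (y * f y) * indicator {\<eta>..<\<delta>} y * ennreal (D y)"
      proof (cases "y \<in> {\<eta>..<\<delta>}")
        case True
        then show ?thesis using inner_powr[of y \<delta> \<beta>] \<eta> \<beta> by (simp add: D_def)
      qed simp
    qed
    finally show ?thesis .
  qed

  have Ieq: "I = ennreal \<beta> * T + ennreal d * P"
  proof -
    have "I = (\<integral>\<^sup>+y. ennreal \<beta> * (ennreal (y * f y) * indicator {\<eta>..<\<delta>} y * ennreal (D y))
                     + ennreal d * (ennreal (y * f y) * indicator {\<eta>..<\<delta>} y) \<partial>lborel)"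
      unfolding I_def
    proof (intro nn_integral_cong)
      fix y
      show "ennreal (y powr (1-\<beta>) * f y) * indicator {\<eta>..<\<delta>} y =
            ennreal \<beta> * (ennreal (y * f y) * indicator {\<eta>..<\<delta>} y * ennreal (D y))
                     + ennreal d * (ennreal (y * f y) * indicator {\<eta>..<\<delta>} y)"
      proof (cases "y \<in> {\<eta>..<\<delta>}")
        case True
        then have y: "0 < y" "y < \<delta>" using \<eta> by auto
        have yf: "0 \<le> y * f y" using y nn[of y] by simp
        have Dn: "0 \<le> D y"
          unfolding D_def using y \<beta> by (intro divide_nonneg_pos) (auto intro!: powr_mono2')
        have e: "y powr (1-\<beta>) * f y = \<beta> * (y * f y * D y) + d * (y * f y)"
        proof -
          have "y powr (1-\<beta>) = y powr (1 + (-\<beta>))" by simp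
          also have "\<dots> = y powr 1 * y powr (-\<beta>)" by (rule powr_add)
          finally have "y powr (1-\<beta>) = y * y powr (-\<beta>)" using y by simp
          then show ?thesis using \<beta> unfolding D_def d_def by (simp add: field_simps)
        qed
        have "ennreal (y powr (1-\<beta>) * f y) = ennreal (\<beta> * (y * f y * D y)) + ennreal (d * (y * f y))"
          unfolding e using \<beta> yf Dn dpos by (intro ennreal_plus) auto
        also have "\<dots> = ennreal \<beta> * (ennreal (y * f y) * ennreal (D y)) + ennreal d * ennreal (y * f y)"
          using \<beta> yf Dn dpos by (simp add: ennreal_mult)
        finally show ?thesis using True by (simp add: mult_ac)
      qed simp
    qed
    also have "\<dots> = ennreal \<beta> * T + ennreal d * P"
    proof -
      have Dm[measurable]: "D \<in> borel_measurable borel" unfolding D_def by measurable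
      have "(\<integral>\<^sup>+y. ennreal \<beta> * (ennreal (y * f y) * indicator {\<eta>..<\<delta>} y * ennreal (D y))
                     + ennreal d * (ennreal (y * f y) * indicator {\<eta>..<\<delta>} y) \<partial>lborel)
           = (\<integral>\<^sup>+y. ennreal \<beta> * (ennreal (y * f y) * indicator {\<eta>..<\<delta>} y * ennreal (D y)) \<partial>lborel)
             + (\<integral>\<^sup>+y. ennreal d * (ennreal (y * f y) * indicator {\<eta>..<\<delta>} y) \<partial>lborel)"
        by (rule nn_integral_add) measurable
      also have "\<dots> = ennreal \<beta> * T + ennreal d * P"
      proof -
        have "(\<integral>\<^sup>+y. ennreal \<beta> * (ennreal (y * f y) * indicator {\<eta>..<\<delta>} y * ennreal (D y)) \<partial>lborel) = ennreal \<beta> * T"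
          unfolding Teq by (rule nn_integral_cmult) measurable
        moreover have "(\<integral>\<^sup>+y. ennreal d * (ennreal (y * f y) * indicator {\<eta>..<\<delta>} y) \<partial>lborel) = ennreal d * P"
          unfolding P_def by (rule nn_integral_cmult) measurable
        ultimately show ?thesis by simp
      qed
      finally show ?thesis .
    qed
    finally show ?thesis .
  qed

  have PMt: "P \<le> Mt"
    unfolding P_def Mt_def
    by (intro nn_integral_mono mult_left_mono) (use \<eta> in \<open>auto simp: indicator_def\<close>)

  have Tfin: "T < top"
  proof (rule ccontr)
    assume "\<not> T < top"
    then have "T = top" by (simp add: less_top[symmetric])
    then have "ennreal (2*\<beta>) * T = top" using \<beta> by (simp add: ennreal_mult_eq_top_iff)
    then show False using Tup Ifin by simp
  qed
  have Pfin: "P < top"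
  proof (rule ccontr)
    assume "\<not> P < top"
    then have "P = top" by (simp add: less_top[symmetric])
    then have "ennreal d * P = top" using dpos by (simp add: ennreal_mult_eq_top_iff)
    then show False using Ieq Ifin by simp
  qed
  obtain t where t: "T = ennreal t" "0 \<le> t" using less_top_ennreal[THEN iffD1, OF Tfin] by blast
  obtain p where p: "P = ennreal p" "0 \<le> p" using less_top_ennreal[THEN iffD1, OF Pfin] by blast
  have Ival: "I = ennreal (\<beta> * t + d * p)"
    using Ieq t p \<beta> dpos by (simp add: ennreal_mult ennreal_plus)
  have "ennreal (2*\<beta>*t) \<le> ennreal (\<beta> * t + d * p)"
    using Tup Ival t \<beta> by (simp add: ennreal_mult)
  then have "2*\<beta>*t \<le> \<beta> * t + d * p"
    using \<beta> t p dpos by (subst (asm) ennreal_le_iff) auto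
  then have "\<beta> * t + d * p \<le> 2 * d * p" by simp
  then have "I \<le> ennreal (2 * d) * P"
    using Ival p dpos by (simp add: ennreal_mult[symmetric] ennreal_leI)
  also have "\<dots> \<le> ennreal (2 * d) * Mt" by (rule mult_left_mono[OF PMt]) simp
  finally show ?thesis unfolding I_def Mt_def d_def .
qed

lemma fin_piece:
  fixes f :: "real \<Rightarrow> real"
  assumes nn: "\<And>x. 0 \<le> f x" and intf: "\<And>a b. 0 < a \<Longrightarrow> set_integrable lborel {a..b} f"
    and a: "0 < a"
  shows "(\<integral>\<^sup>+x. ennreal (f x) * indicator {a..<b} x \<partial>lborel) < top"
proof -
  have "(\<integral>\<^sup>+x. ennreal (f x) * indicator {a..<b} x \<partial>lborel) \<le> (\<integral>\<^sup>+x. ennreal (norm (indicator {a..b} x *\<^sub>R f x)) \<partial>lborel)"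
    by (intro nn_integral_mono) (auto simp: indicator_def nn)
  also have "\<dots> < top"
    using intf[of a b] a unfolding set_integrable_def integrable_iff_bounded by simp
  finally show ?thesis .
qed

lemma key:
  fixes f :: "real \<Rightarrow> real" and \<beta> c0 :: real
  assumes fm[measurable]: "f \<in> borel_measurable borel" and nn: "\<And>x. 0 \<le> f x"
    and intf: "\<And>a b. 0 < a \<Longrightarrow> set_integrable lborel {a..b} f"
    and Mtfin: "(\<integral>\<^sup>+y. ennreal (y * f y) * indicator {0<..} y \<partial>lborel) < top"
    and \<beta>: "0 < \<beta>" "\<beta> < 1" and c0: "0 < c0"
    and ineq: "AE x in lborel. 0 < x \<and> x < 1 \<longrightarrow>
       ennreal c0 * (\<integral>\<^sup>+y. ennreal (y * f y) * indicator {0<..<x} y \<partial>lborel)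
         * (\<integral>\<^sup>+z. ennreal (f z) * indicator {x..<1} z \<partial>lborel) \<le> ennreal (x^2 * f x)"
  shows "(\<integral>\<^sup>+x. ennreal (x powr (1-\<beta>) * f x) * indicator {0<..<1} x \<partial>lborel) < top"
proof -
  define S where "S = (\<integral>\<^sup>+z. ennreal (f z) * indicator {0<..<1} z \<partial>lborel)"
  define Mt where "Mt = (\<integral>\<^sup>+y. ennreal (y * f y) * indicator {0<..} y \<partial>lborel)"
  have le1: "ennreal (x powr (1-\<beta>) * f x) \<le> ennreal (f x)" if "0 < x" "x \<le> 1" for x
  proof -
    have "x powr (1-\<beta>) \<le> 1 powr (1-\<beta>)" using that \<beta> by (intro powr_mono2) auto
    then have "x powr (1-\<beta>) * f x \<le> f x" using nn[of x] by (simp add: mult_left_le_one_le)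
    then show ?thesis by (rule ennreal_leI)
  qed
  show ?thesis
  proof (cases "S < top")
    case True
    have "(\<integral>\<^sup>+x. ennreal (x powr (1-\<beta>) * f x) * indicator {0<..<1} x \<partial>lborel) \<le> S"
      unfolding S_def
    proof (intro nn_integral_mono)
      fix x show "ennreal (x powr (1-\<beta>) * f x) * indicator {0<..<1} x \<le> ennreal (f x) * indicator {0<..<1} x"
        by (cases "x \<in> {0<..<1}") (auto intro: le1)
    qed
    then show ?thesis using True by (simp add: le_less_trans)
  next
    case False
    then have Stop: "S = top" by (simp add: less_top[symmetric])
    have "S = (SUP n. \<integral>\<^sup>+z. ennreal (f z) * indicator {1/Suc n..<1} z \<partial>lborel)"
      unfolding S_def by (rule mc_lemma) auto
    then have "ennreal (2*\<beta>/c0) < (SUP n. \<integral>\<^sup>+z. ennreal (f z) * indicator {1/Suc n..<1} z \<partial>lborel)"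
      using Stop by simp
    then obtain n where n: "ennreal (2*\<beta>/c0) < (\<integral>\<^sup>+z. ennreal (f z) * indicator {1/Suc n..<1} z \<partial>lborel)"
      by (auto simp: less_SUP_iff)
    define \<delta> where "\<delta> = 1 / real (Suc n)"
    have \<delta>: "0 < \<delta>" "\<delta> \<le> 1" unfolding \<delta>_def by auto
    have ineq2: "AE x in lborel. 0 < x \<and> x < \<delta> \<longrightarrow>
       ennreal (2*\<beta>) * (\<integral>\<^sup>+y. ennreal (y * f y) * indicator {0<..<x} y \<partial>lborel) \<le> ennreal (x^2 * f x)"
      using ineq
    proof (rule AE_mp, intro AE_I2 impI)
      fix x :: real
      assume h: "0 < x \<and> x < 1 \<longrightarrow>
       ennreal c0 * (\<integral>\<^sup>+y. ennreal (y * f y) * indicator {0<..<x} y \<partial>lborel)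
         * (\<integral>\<^sup>+z. ennreal (f z) * indicator {x..<1} z \<partial>lborel) \<le> ennreal (x^2 * f x)"
        and x: "0 < x \<and> x < \<delta>"
      let ?\<Phi> = "\<integral>\<^sup>+y. ennreal (y * f y) * indicator {0<..<x} y \<partial>lborel"
      have "ennreal (2*\<beta>/c0) \<le> (\<integral>\<^sup>+z. ennreal (f z) * indicator {\<delta>..<1} z \<partial>lborel)"
        using n unfolding \<delta>_def by simp
      also have "\<dots> \<le> (\<integral>\<^sup>+z. ennreal (f z) * indicator {x..<1} z \<partial>lborel)"
        by (intro nn_integral_mono mult_left_mono) (use x in \<open>auto simp: indicator_def\<close>)
      finally have G: "ennreal (2*\<beta>/c0) \<le> (\<integral>\<^sup>+z. ennreal (f z) * indicator {x..<1} z \<partial>lborel)" .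
      have "ennreal (2*\<beta>) * ?\<Phi> = ennreal c0 * ?\<Phi> * ennreal (2*\<beta>/c0)"
      proof -
        have "ennreal c0 * ennreal (2*\<beta>/c0) = ennreal (2*\<beta>)"
          using c0 \<beta> by (simp add: ennreal_mult[symmetric])
        then show ?thesis by (metis mult.assoc mult.commute)
      qed
      also have "\<dots> \<le> ennreal c0 * ?\<Phi> * (\<integral>\<^sup>+z. ennreal (f z) * indicator {x..<1} z \<partial>lborel)"
        by (rule mult_left_mono[OF G]) simp
      also have "\<dots> \<le> ennreal (x^2 * f x)" using h x \<delta> by simp
      finally show "ennreal (2*\<beta>) * ?\<Phi> \<le> ennreal (x^2 * f x)" .
    qed
    let ?h = "\<lambda>x. ennreal (x powr (1-\<beta>) * f x)"
    have A: "(\<integral>\<^sup>+x. ?h x * indicator {0<..<\<delta>} x \<partial>lborel) \<le> ennreal (2 * \<delta> powr (-\<beta>)) * Mt"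
    proof -
      have "(\<integral>\<^sup>+x. ?h x * indicator {0<..<\<delta>} x \<partial>lborel) = (SUP m. \<integral>\<^sup>+x. ?h x * indicator {\<delta>/Suc m..<\<delta>} x \<partial>lborel)"
        by (rule mc_lemma) (use \<delta> in auto)
      also have "\<dots> \<le> ennreal (2 * \<delta> powr (-\<beta>)) * Mt"
      proof (rule SUP_least)
        fix m :: nat
        show "(\<integral>\<^sup>+x. ?h x * indicator {\<delta>/Suc m..<\<delta>} x \<partial>lborel) \<le> ennreal (2 * \<delta> powr (-\<beta>)) * Mt"
        proof (cases m)
          case 0
          then show ?thesis by simp
        next
          case (Suc k)
          have "\<delta>/Suc m < \<delta>" using \<delta> Suc by (simp add: divide_less_eq)
          moreover have "0 < \<delta>/Suc m" using \<delta> by simp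
          ultimately show ?thesis unfolding Mt_def
            by (intro key_step[OF fm nn intf \<beta> \<delta> _ _ ineq2]) auto
        qed
      qed
      finally show ?thesis .
    qed
    have B: "(\<integral>\<^sup>+x. ?h x * indicator {\<delta>..<1} x \<partial>lborel) < top"
    proof -
      have "(\<integral>\<^sup>+x. ?h x * indicator {\<delta>..<1} x \<partial>lborel) \<le> (\<integral>\<^sup>+x. ennreal (f x) * indicator {\<delta>..<1} x \<partial>lborel)"
      proof (intro nn_integral_mono)
        fix x show "?h x * indicator {\<delta>..<1} x \<le> ennreal (f x) * indicator {\<delta>..<1} x"
          by (cases "x \<in> {\<delta>..<1}") (use \<delta> in \<open>auto intro: le1\<close>)
      qed
      also have "\<dots> < top" by (rule fin_piece[OF nn intf \<delta>(1)])
      finally show ?thesis .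
    qed
    have "(\<integral>\<^sup>+x. ?h x * indicator {0<..<1} x \<partial>lborel)
          \<le> (\<integral>\<^sup>+x. ?h x * indicator {0<..<\<delta>} x + ?h x * indicator {\<delta>..<1} x \<partial>lborel)"
      by (intro nn_integral_mono) (auto simp: indicator_def)
    also have "\<dots> = (\<integral>\<^sup>+x. ?h x * indicator {0<..<\<delta>} x \<partial>lborel) + (\<integral>\<^sup>+x. ?h x * indicator {\<delta>..<1} x \<partial>lborel)"
      by (rule nn_integral_add) measurable
    also have "\<dots> < top"
    proof -
      have "ennreal (2 * \<delta> powr (-\<beta>)) * Mt < top"
        using Mtfin unfolding Mt_def by (simp add: ennreal_mult_less_top)
      then have "(\<integral>\<^sup>+x. ?h x * indicator {0<..<\<delta>} x \<partial>lborel) < top" using A by (rule le_less_trans[rotated])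
      then show ?thesis using B by simp
    qed
    finally show ?thesis .
  qed
qed

lemma prod_int:
  fixes u v :: "real \<Rightarrow> real"
  assumes u: "integrable lborel u" and v: "integrable lborel v"
  shows "integrable (lborel \<Otimes>\<^sub>M lborel) (\<lambda>p. u (fst p) * v (snd p))"
proof (rule integrableI_bounded)
  have [measurable]: "u \<in> borel_measurable borel" "v \<in> borel_measurable borel"
    using borel_measurable_integrable[OF u] borel_measurable_integrable[OF v] by auto
  show "(\<lambda>p. u (fst p) * v (snd p)) \<in> borel_measurable (lborel \<Otimes>\<^sub>M lborel)" by measurable
  have "(\<integral>\<^sup>+p. ennreal (norm (u (fst p) * v (snd p))) \<partial>(lborel \<Otimes>\<^sub>M lborel))
      = (\<integral>\<^sup>+x. \<integral>\<^sup>+y. ennreal (norm (u (fst (x,y)) * v (snd (x,y)))) \<partial>lborel \<partial>lborel)"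
    by (rule lborel.nn_integral_fst[symmetric]) measurable
  also have "\<dots> = (\<integral>\<^sup>+x. ennreal (norm (u x)) * (\<integral>\<^sup>+y. ennreal (norm (v y)) \<partial>lborel) \<partial>lborel)"
    by (intro nn_integral_cong) (simp add: nn_integral_cmult[symmetric] abs_mult ennreal_mult)
  also have "\<dots> = (\<integral>\<^sup>+y. ennreal (norm (v y)) \<partial>lborel) * (\<integral>\<^sup>+x. ennreal (norm (u x)) \<partial>lborel)"
    by (subst mult.commute, rule nn_integral_cmult) measurable
  also have "\<dots> < top"
    using u v unfolding integrable_iff_bounded by (simp add: ennreal_mult_less_top)
  finally have fin: "(\<integral>\<^sup>+p. ennreal (norm (u (fst p) * v (snd p))) \<partial>(lborel \<Otimes>\<^sub>M lborel)) < top" .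
  then show "(\<integral>\<^sup>+p. ennreal (norm (u (fst p) * v (snd p))) \<partial>(lborel \<Otimes>\<^sub>M lborel)) < \<infinity>" by simp
qed

lemma one_minus_exp_bound:
  fixes q a :: real
  assumes "0 < q" "q \<le> 1" "0 < a"
  shows "0 \<le> 1 - exp (- q * a)" "1 - exp (- q * a) \<le> min 1 a"
proof -
  have "exp (- q * a) \<le> 1" using assms by simp
  then show "0 \<le> 1 - exp (- q * a)" by simp
  have "1 + (- q * a) \<le> exp (- q * a)" by (rule exp_ge_add_one_self)
  then have "1 - exp (- q * a) \<le> q * a" by simp
  also have "\<dots> \<le> a" using assms by (simp add: mult_left_le_one_le)
  finally show "1 - exp (- q * a) \<le> min 1 a" by simp
qed

lemma bound_pt:
  fixes W A B ga gb a b q \<epsilon> :: real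
  assumes "0 < a" "0 < b" "0 < q" "q \<le> 1" "0 \<le> ga" "0 \<le> gb"
    and "\<bar>W\<bar> \<le> \<epsilon> * (1 + A + B)"
  shows "\<bar>W * ga * gb * (1 - exp (- q * a)) * (1 - exp (- q * b))\<bar>
         \<le> \<epsilon> * (1 + A + B) * ga * gb * min 1 a * min 1 b"
proof -
  note ea = one_minus_exp_bound[OF assms(3,4,1)] and eb = one_minus_exp_bound[OF assms(3,4,2)]
  have "\<bar>W * ga * gb * (1 - exp (- q * a)) * (1 - exp (- q * b))\<bar>
        = \<bar>W\<bar> * (ga * gb) * ((1 - exp (- q * a)) * (1 - exp (- q * b)))"
    using assms ea eb by (simp add: abs_mult)
  also have "\<dots> \<le> (\<epsilon> * (1 + A + B)) * (ga * gb) * (min 1 a * min 1 b)"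
  proof -
    have c: "0 \<le> \<epsilon> * (1 + A + B)" using assms(7) by (meson abs_ge_zero order_trans)
    have p1: "\<bar>W\<bar> * (ga * gb) \<le> \<epsilon> * (1 + A + B) * (ga * gb)"
      using assms by (intro mult_right_mono) auto
    have p2: "(1 - exp (- q * a)) * (1 - exp (- q * b)) \<le> min 1 a * min 1 b"
      using ea eb assms(1,2) by (intro mult_mono) auto
    show ?thesis using c assms ea eb by (intro mult_mono[OF p1 p2]) auto
  qed
  finally show ?thesis by (simp add: mult_ac)
qed

lemma hA_le:
  fixes x \<alpha> :: real
  assumes "0 < x" "0 \<le> \<alpha>" "\<alpha> \<le> 1"
  shows "x powr \<alpha> * min 1 x \<le> x"
proof (cases "x \<le> 1")
  case True
  have "x powr \<alpha> \<le> 1 powr \<alpha>" using assms True by (intro powr_mono2) auto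
  then have "x powr \<alpha> \<le> 1" by simp
  then show ?thesis using True assms by (simp add: mult_left_le_one_le)
next
  case False
  have "x powr \<alpha> \<le> x powr 1" using assms False by (intro powr_mono) auto
  then show ?thesis using False assms by simp
qed

lemma hB_le:
  fixes x \<alpha> :: real
  assumes "0 < x" "0 \<le> \<alpha>"
  shows "x powr (-\<alpha>) * min 1 x \<le> x + (if x < 1 then x powr (1-\<alpha>) else 0)"
proof (cases "x < 1")
  case True
  have "x powr (-\<alpha>) * x = x powr (-\<alpha>) * x powr 1" using assms by simp
  also have "\<dots> = x powr (-\<alpha> + 1)" by (rule powr_add[symmetric])
  finally have "x powr (-\<alpha>) * min 1 x = x powr (1-\<alpha>)" using True by simp
  then show ?thesis using True assms by simp
next
  case False
  have "x powr (-\<alpha>) \<le> 1 powr (-\<alpha>)" using assms False by (intro powr_mono2') auto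
  then have "x powr (-\<alpha>) \<le> 1" by simp
  then show ?thesis using False by simp
qed

theorem lemma2p1:
  fixes \<alpha> \<epsilon> C0 c0 :: real and K :: "real \<Rightarrow> real \<Rightarrow> real" and f :: "real \<Rightarrow> real"
  assumes "kernel_assumptions \<alpha> \<epsilon> C0 K"
    and "c0 > 0" and "\<forall>x>0. \<forall>y>0. K x y \<ge> c0"
    and "self_similar_profile K f"
  shows "(Mff K f \<longlongrightarrow> 0) (at_right 0)"
proof -
  note ka = assms(1)[unfolded kernel_assumptions_def]
  have \<alpha>: "0 \<le> \<alpha>" "\<alpha> < 1" and \<epsilon>: "\<epsilon> > 0" using ka by auto
  have kd: "\<forall>x>0. \<forall>y>0. (\<lambda>p. K (fst p) (snd p)) differentiable (at (x, y))"
    using ka by (elim conjE) assumption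
  have kl: "\<forall>x>0. \<forall>y>0. K x y - 2 \<ge> - \<epsilon>" using ka by (elim conjE) assumption
  have kh: "\<forall>x>0. \<forall>y>0. K x y - 2 \<le> \<epsilon> * ((x / y) powr \<alpha> + (y / x) powr \<alpha>)"
    using ka by (elim conjE) assumption
  have Kdiff: "\<And>x y. 0 < x \<Longrightarrow> 0 < y \<Longrightarrow> (\<lambda>p. K (fst p) (snd p)) differentiable (at (x, y))"
    using kd by simp
  have Wlo: "\<And>x y. 0 < x \<Longrightarrow> 0 < y \<Longrightarrow> K x y - 2 \<ge> - \<epsilon>" using kl by simp
  have Whi: "\<And>x y. 0 < x \<Longrightarrow> 0 < y \<Longrightarrow> K x y - 2 \<le> \<epsilon> * ((x / y) powr \<alpha> + (y / x) powr \<alpha>)"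
    using kh by simp
  have Kc0: "\<And>x y. 0 < x \<Longrightarrow> 0 < y \<Longrightarrow> c0 \<le> K x y" using assms(3) by simp
  have c0: "0 < c0" by fact
  define g where "g = (\<lambda>x. indicator {0<..} x * f x)"
  have sspg: "self_similar_profile K g" unfolding g_def by (rule reduce_ssp[OF assms(4)])
  have MffEq: "Mff K f = Mff K g" unfolding g_def by (rule reduce_Mff)
  note sf = assms(4)[unfolded self_similar_profile_def]
  note sg = sspg[unfolded self_similar_profile_def]
  have gm[measurable]: "g \<in> borel_measurable borel"
    unfolding g_def by (rule meas_pos) (use sf in blast)
  have gnn: "\<And>x. 0 \<le> g x" using sf by (simp add: g_def indicator_def)
  have gint: "\<And>a b. 0 < a \<Longrightarrow> set_integrable lborel {a..b} g" using sg by blast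
  have Xint: "integrable lborel (\<lambda>x. indicator {0<..} x * (x * g x))"
    using sg unfolding set_integrable_def by simp
  have Mtfin: "(\<integral>\<^sup>+y. ennreal (y * g y) * indicator {0<..} y \<partial>lborel) < top"
  proof -
    have "(\<integral>\<^sup>+y. ennreal (y * g y) * indicator {0<..} y \<partial>lborel)
        = (\<integral>\<^sup>+y. ennreal (norm (indicator {0<..} y * (y * g y))) \<partial>lborel)"
      by (intro nn_integral_cong) (auto simp: indicator_def gnn)
    also have "\<dots> < top" using Xint unfolding integrable_iff_bounded by simp
    finally show ?thesis .
  qed
  have ineq: "AE x in lborel. 0 < x \<and> x < 1 \<longrightarrow>
       ennreal c0 * (\<integral>\<^sup>+y. ennreal (y * g y) * indicator {0<..<x} y \<partial>lborel)
         * (\<integral>\<^sup>+z. ennreal (g z) * indicator {x..<1} z \<partial>lborel) \<le> ennreal (x^2 * g x)"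
    using sg[THEN conjunct2, THEN conjunct2, THEN conjunct2]
  proof (rule AE_mp, intro AE_I2 impI)
    fix x :: real
    assume h: "x > 0 \<longrightarrow> ennreal (x\<^sup>2 * g x) =
          (\<integral>\<^sup>+ y. (\<integral>\<^sup>+ z. ennreal (K y z * y * g y * g z) * indicator {x - y<..} z \<partial>lborel)
                     * indicator {0<..<x} y \<partial>lborel)" and x: "0 < x \<and> x < 1"
    define G where "G = (\<integral>\<^sup>+z. ennreal (g z) * indicator {x..<1} z \<partial>lborel)"
    have "ennreal c0 * (\<integral>\<^sup>+y. ennreal (y * g y) * indicator {0<..<x} y \<partial>lborel) * G
        = (\<integral>\<^sup>+y. (ennreal c0 * G) * (ennreal (y * g y) * indicator {0<..<x} y) \<partial>lborel)"
      by (subst nn_integral_cmult) (measurable, simp add: mult_ac)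
    also have "\<dots> \<le> (\<integral>\<^sup>+ y. (\<integral>\<^sup>+ z. ennreal (K y z * y * g y * g z) * indicator {x - y<..} z \<partial>lborel)
                     * indicator {0<..<x} y \<partial>lborel)"
    proof (intro nn_integral_mono)
      fix y
      show "(ennreal c0 * G) * (ennreal (y * g y) * indicator {0<..<x} y) \<le>
            (\<integral>\<^sup>+ z. ennreal (K y z * y * g y * g z) * indicator {x - y<..} z \<partial>lborel) * indicator {0<..<x} y"
      proof (cases "y \<in> {0<..<x}")
        case True
        then have y: "0 < y" "y < x" by auto
        have "(ennreal c0 * G) * (ennreal (y * g y) * indicator {0<..<x} y) = ennreal (c0 * (y * g y)) * G"
          using True c0 y gnn[of y] by (simp add: ennreal_mult mult_ac)
        also have "\<dots> = (\<integral>\<^sup>+z. ennreal (c0 * (y * g y)) * (ennreal (g z) * indicator {x..<1} z) \<partial>lborel)"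
          unfolding G_def by (rule nn_integral_cmult[symmetric]) measurable
        also have "\<dots> \<le> (\<integral>\<^sup>+ z. ennreal (K y z * y * g y * g z) * indicator {x - y<..} z \<partial>lborel)"
        proof (intro nn_integral_mono)
          fix z
          show "ennreal (c0 * (y * g y)) * (ennreal (g z) * indicator {x..<1} z) \<le> ennreal (K y z * y * g y * g z) * indicator {x - y<..} z"
          proof (cases "z \<in> {x..<1}")
            case True
            then have z: "0 < z" "x - y < z" using y x by auto
            have "c0 * (y * g y * g z) \<le> K y z * (y * g y * g z)"
              using Kc0[OF y(1) z(1)] y gnn[of y] gnn[of z] by (intro mult_right_mono) auto
            then have "ennreal (c0 * (y * g y) * g z) \<le> ennreal (K y z * y * g y * g z)"
              by (intro ennreal_leI) (simp add: mult_ac)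
            then show ?thesis using True z c0 y gnn[of y] gnn[of z]
              by (simp add: ennreal_mult[symmetric] indicator_def)
          qed simp
        qed
        finally show ?thesis using True by simp
      qed simp
    qed
    also have "\<dots> = ennreal (x\<^sup>2 * g x)" using h x by simp
    finally show "ennreal c0 * (\<integral>\<^sup>+y. ennreal (y * g y) * indicator {0<..<x} y \<partial>lborel) * G \<le> ennreal (x^2 * g x)" .
  qed
  have Yint: "integrable lborel (\<lambda>x. indicator {0<..<1} x * (x powr (1-\<alpha>) * g x))"
  proof (cases "\<alpha> = 0")
    case True
    show ?thesis
    proof (rule Bochner_Integration.integrable_bound[OF Xint])
      show "(\<lambda>x. indicator {0<..<1} x * (x powr (1-\<alpha>) * g x)) \<in> borel_measurable lborel" by measurable
      show "AE x in lborel. norm (indicator {0<..<1} x * (x powr (1-\<alpha>) * g x)) \<le> norm (indicator {0<..} x * (x * g x))"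
        using True gnn by (intro AE_I2) (auto simp: indicator_def)
    qed
  next
    case False
    then have \<alpha>p: "0 < \<alpha>" using \<alpha> by simp
    have fin: "(\<integral>\<^sup>+x. ennreal (x powr (1-\<alpha>) * g x) * indicator {0<..<1} x \<partial>lborel) < top"
      by (rule key[OF gm gnn gint Mtfin \<alpha>p \<alpha>(2) c0 ineq])
    show ?thesis
    proof (rule integrableI_bounded)
      show "(\<lambda>x. indicator {0<..<1} x * (x powr (1-\<alpha>) * g x)) \<in> borel_measurable lborel" by measurable
      have "(\<integral>\<^sup>+x. ennreal (norm (indicator {0<..<1} x * (x powr (1-\<alpha>) * g x))) \<partial>lborel)
          = (\<integral>\<^sup>+x. ennreal (x powr (1-\<alpha>) * g x) * indicator {0<..<1} x \<partial>lborel)"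
        by (intro nn_integral_cong) (auto simp: indicator_def gnn)
      with fin show "(\<integral>\<^sup>+x. ennreal (norm (indicator {0<..<1} x * (x powr (1-\<alpha>) * g x))) \<partial>lborel) < \<infinity>"
        by simp
    qed
  qed
  define h0 where "h0 x = indicator {0<..} x * (g x * min 1 x)" for x :: real
  define hA where "hA x = indicator {0<..} x * (x powr \<alpha> * g x * min 1 x)" for x :: real
  define hB where "hB x = indicator {0<..} x * (x powr (-\<alpha>) * g x * min 1 x)" for x :: real
  have hnn: "0 \<le> h0 x" "0 \<le> hA x" "0 \<le> hB x" for x
    unfolding h0_def hA_def hB_def using gnn[of x] by (auto simp: indicator_def)
  have h0int: "integrable lborel h0"
  proof (rule Bochner_Integration.integrable_bound[OF Xint])
    show "h0 \<in> borel_measurable lborel" unfolding h0_def by measurable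
    show "AE x in lborel. norm (h0 x) \<le> norm (indicator {0<..} x * (x * g x))"
    proof (intro AE_I2)
      fix x :: real
      show "norm (h0 x) \<le> norm (indicator {0<..} x * (x * g x))"
      proof (cases "0 < x")
        case True
        have "g x * min 1 x \<le> g x * x" using gnn[of x] by (intro mult_left_mono) auto
        then show ?thesis using True gnn[of x] hnn(1)[of x] unfolding h0_def by (simp add: mult_ac)
      qed (simp add: h0_def)
    qed
  qed
  have hAint: "integrable lborel hA"
  proof (rule Bochner_Integration.integrable_bound[OF Xint])
    show "hA \<in> borel_measurable lborel" unfolding hA_def by measurable
    show "AE x in lborel. norm (hA x) \<le> norm (indicator {0<..} x * (x * g x))"
    proof (intro AE_I2)
      fix x :: real
      show "norm (hA x) \<le> norm (indicator {0<..} x * (x * g x))"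
      proof (cases "0 < x")
        case True
        have "g x * (x powr \<alpha> * min 1 x) \<le> g x * x" using gnn[of x] hA_le[OF True \<alpha>(1)] \<alpha>
          by (intro mult_left_mono) auto
        then show ?thesis using True gnn[of x] hnn(2)[of x] unfolding hA_def by (simp add: mult_ac)
      qed (simp add: hA_def)
    qed
  qed
  have hBint: "integrable lborel hB"
  proof (rule Bochner_Integration.integrable_bound[OF Bochner_Integration.integrable_add[OF Xint Yint]])
    show "hB \<in> borel_measurable lborel" unfolding hB_def by measurable
    show "AE x in lborel. norm (hB x) \<le> norm (indicator {0<..} x * (x * g x) + indicator {0<..<1} x * (x powr (1-\<alpha>) * g x))"
    proof (intro AE_I2)
      fix x :: real
      show "norm (hB x) \<le> norm (indicator {0<..} x * (x * g x) + indicator {0<..<1} x * (x powr (1-\<alpha>) * g x))"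
      proof (cases "0 < x")
        case True
        have "g x * (x powr (-\<alpha>) * min 1 x) \<le> g x * (x + (if x < 1 then x powr (1-\<alpha>) else 0))"
          using gnn[of x] hB_le[OF True \<alpha>(1)] by (intro mult_left_mono) auto
        then show ?thesis using True gnn[of x] hnn(3)[of x] unfolding hB_def
          by (auto simp: mult_ac indicator_def distrib_left)
      qed (simp add: hB_def)
    qed
  qed
  define w where "w p = \<epsilon> * (h0 (fst p) * h0 (snd p) + hA (fst p) * hB (snd p) + hB (fst p) * hA (snd p))"
    for p :: "real \<times> real"
  have wint: "integrable (lborel \<Otimes>\<^sub>M lborel) w"
    unfolding w_def
    by (intro Bochner_Integration.integrable_mult_right Bochner_Integration.integrable_add prod_int h0int hAint hBint)
  define Q where "Q = ({0<..} \<times> {0<..} :: (real \<times> real) set)"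
  have Kmeas[measurable]: "(\<lambda>p. indicator Q p * (K (fst p) (snd p) - 2)) \<in> borel_measurable (lborel \<Otimes>\<^sub>M lborel)"
  proof -
    have cont: "continuous_on Q (\<lambda>p. K (fst p) (snd p) - 2)"
    proof (intro continuous_on_diff continuous_on_const continuous_at_imp_continuous_on ballI)
      fix p assume "p \<in> Q"
      then obtain x y where p: "p = (x, y)" "0 < x" "0 < y" unfolding Q_def by auto
      show "isCont (\<lambda>p. K (fst p) (snd p)) p"
        using differentiable_imp_continuous_within[OF Kdiff[OF p(2,3)]] p(1) by simp
    qed
    have "open Q" unfolding Q_def by (intro open_Times) auto
    then have m: "(\<lambda>p. indicator Q p *\<^sub>R (K (fst p) (snd p) - 2)) \<in> borel_measurable borel"
      by (intro borel_measurable_continuous_on_indicator cont) auto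
    have se: "sets (lborel \<Otimes>\<^sub>M lborel) = sets (borel :: (real \<times> real) measure)"
    proof -
      have "sets (lborel \<Otimes>\<^sub>M lborel) = sets (borel \<Otimes>\<^sub>M borel :: (real \<times> real) measure)"
        by (rule sets_pair_measure_cong) simp_all
      also have "\<dots> = sets borel" by (metis borel_prod)
      finally show ?thesis .
    qed
    show ?thesis using m unfolding measurable_cong_sets[OF se refl] by simp
  qed
  define s where "s t p = (indicator Q p * (K (fst p) (snd p) - 2)) * ((g (fst p) * g (snd p)) *
       ((1 - exp (- inverse t * fst p)) * (1 - exp (- inverse t * snd p))))" for t :: real and p :: "real \<times> real"
  have sm: "\<And>t. s t \<in> borel_measurable (lborel \<Otimes>\<^sub>M lborel)" unfolding s_def by measurable
  have ex0: "((\<lambda>t. 1 - exp (- inverse t * a)) \<longlongrightarrow> 0) at_top" for a :: real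
  proof -
    have "((\<lambda>t::real. inverse t) \<longlongrightarrow> 0) at_top" by (rule tendsto_inverse_0_at_top[OF filterlim_ident])
    then have "((\<lambda>t. 1 - exp (- inverse t * a)) \<longlongrightarrow> 1 - exp (- 0 * a)) at_top" by (intro tendsto_intros)
    then show ?thesis by simp
  qed
  have lim: "AE p in lborel \<Otimes>\<^sub>M lborel. ((\<lambda>t. s t p) \<longlongrightarrow> 0) at_top"
  proof (intro AE_I2)
    fix p :: "real \<times> real"
    have "((\<lambda>t. s t p) \<longlongrightarrow> (indicator Q p * (K (fst p) (snd p) - 2)) * ((g (fst p) * g (snd p)) * (0 * 0))) at_top"
      unfolding s_def by (intro tendsto_mult tendsto_const ex0)
    then show "((\<lambda>t. s t p) \<longlongrightarrow> 0) at_top" by simp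
  qed
  have bound: "\<forall>\<^sub>F t in at_top. AE p in lborel \<Otimes>\<^sub>M lborel. norm (s t p) \<le> w p"
    using eventually_ge_at_top[of "1::real"]
  proof eventually_elim
    case (elim t)
    define q where "q = inverse t"
    have q: "0 < q" "q \<le> 1" unfolding q_def using elim by (auto simp: inverse_le_1_iff)
    show ?case
    proof (intro AE_I2)
      fix p :: "real \<times> real"
      obtain a b where p: "p = (a, b)" by fastforce
      show "norm (s t p) \<le> w p"
      proof (cases "p \<in> Q")
        case False
        then have "s t p = 0" unfolding s_def by simp
        then show ?thesis using hnn \<epsilon> unfolding w_def by (simp add: mult_nonneg_nonneg add_nonneg_nonneg)
      next
        case True
        then have ab: "0 < a" "0 < b" using p unfolding Q_def by auto
        define A where "A = (a / b) powr \<alpha>"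
        define B where "B = (b / a) powr \<alpha>"
        have AB: "0 \<le> A" "0 \<le> B" unfolding A_def B_def by auto
        have Wb: "\<bar>K a b - 2\<bar> \<le> \<epsilon> * (1 + A + B)"
        proof -
          have w1: "K a b - 2 \<ge> - \<epsilon>" by (rule Wlo[OF ab])
          have w2: "K a b - 2 \<le> \<epsilon> * (A + B)" unfolding A_def B_def by (rule Whi[OF ab])
          have e: "\<epsilon> * (1 + A + B) = \<epsilon> + \<epsilon> * (A + B)" by (simp add: algebra_simps)
          have "0 \<le> \<epsilon> * (A + B)" using AB \<epsilon> by simp
          then show ?thesis unfolding e using w1 w2 \<epsilon> by (simp add: abs_le_iff)
        qed
        have "norm (s t p) = \<bar>(K a b - 2) * g a * g b * (1 - exp (- q * a)) * (1 - exp (- q * b))\<bar>"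
          using True p unfolding s_def q_def by (simp add: mult_ac)
        also have "\<dots> \<le> \<epsilon> * (1 + A + B) * g a * g b * min 1 a * min 1 b"
          by (rule bound_pt[OF ab q gnn gnn Wb])
        also have "\<dots> = w p"
        proof -
          have A': "A = a powr \<alpha> * b powr (-\<alpha>)"
          proof -
            have "(a/b) powr \<alpha> = a powr \<alpha> / b powr \<alpha>" using ab by (meson less_imp_le powr_divide)
            then show ?thesis unfolding A_def by (simp add: powr_minus divide_inverse)
          qed
          have B': "B = b powr \<alpha> * a powr (-\<alpha>)"
          proof -
            have "(b/a) powr \<alpha> = b powr \<alpha> / a powr \<alpha>" using ab by (meson less_imp_le powr_divide)
            then show ?thesis unfolding B_def by (simp add: powr_minus divide_inverse)
          qed
          show ?thesis unfolding w_def h0_def hA_def hB_def A' B' using p ab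
            by (simp add: algebra_simps)
        qed
        finally show ?thesis .
      qed
    qed
  qed
  have "((\<lambda>t. integral\<^sup>L (lborel \<Otimes>\<^sub>M lborel) (s t)) \<longlongrightarrow> 0) at_top"
    using integral_dominated_convergence_at_top[OF borel_measurable_const sm wint lim bound] by simp
  then have lim2: "((\<lambda>t. 1/2 * integral\<^sup>L (lborel \<Otimes>\<^sub>M lborel) (s t)) \<longlongrightarrow> 1/2 * 0) at_top"
    by (intro tendsto_mult tendsto_const)
  have meq: "Mff K g (inverse t) = 1/2 * integral\<^sup>L (lborel \<Otimes>\<^sub>M lborel) (s t)" for t
    unfolding Mff_def s_def Q_def
    by (intro arg_cong[where f="\<lambda>x. 1/2 * x"] Bochner_Integration.integral_cong) (simp_all add: mult_ac)
  have fe: "(\<lambda>t. Mff K g (inverse t)) = (\<lambda>t. 1/2 * integral\<^sup>L (lborel \<Otimes>\<^sub>M lborel) (s t))"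
    by (rule ext) (rule meq)
  have "((\<lambda>t. Mff K g (inverse t)) \<longlongrightarrow> 0) at_top"
    unfolding fe using lim2 by simp
  then show ?thesis unfolding MffEq filterlim_at_right_to_top .
qed

end
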